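(* Let $(\mathcal V,\mathcal W,\lambda)$ be a FTvN system. If $E\subseteq \mathcal V$ is convex and spectral, then $\lambda(E)$ is convex in $\mathcal W$. In particular, if $E$ is a spectral set that is also a convex cone, then $\lambda(E)$ is a convex cone.
   Context: A Fan-Theobald-von Neumann (FTvN) system is a triple $(\mathcal V,\mathcal W,\lambda)$ where $\mathcal V,\mathcal W$ are real inner product spaces and $\lambda:\mathcal V\to\mathcal W$ is a map such that: (A1) $\|\lambda(x)\|=\|x\|$ for all $x\in\mathcal V$; (A2) $\langle x,y\rangle\le\langle\lambda(x),\lambda(y)\rangle$ for all $x,y\in\mathcal V$; (A3) for every $c\in\mathcal V$ and $q\in\lambda(\mathcal V)$ there exists $x\in\mathcal V$ with $\lambda(x)=q$ and $\langle c,x\rangle=\langle\lambda(c),\lambda(x)\rangle$. The $\lambda$-orbit of $u\in\mathcal V$ is $[u]=\{x\in\mathcal V:\lambda(x)=\lambda(u)\}$. A set $E\subseteq\mathcal V$ is spectral if $E=\lambda^{-1}(Q)$ for some $Q\subseteq\mathcal W$, equivalently if $x\in E$ implies $[x]\subseteq E$. A cone is a nonempty set closed under multiplication by nonnegative scalars. *)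

theory Defs
  imports "HOL-Analysis.Analysis"
begin

definition FTvN_system :: "('v::real_inner \<Rightarrow> 'w::real_inner) \<Rightarrow> bool" where
  "FTvN_system lam \<longleftrightarrow>
     (\<forall>x. norm (lam x) = norm x) \<and>
     (\<forall>x y. inner x y \<le> inner (lam x) (lam y)) \<and>
     (\<forall>c q. q \<in> range lam \<longrightarrow> (\<exists>x. lam x = q \<and> inner c x = inner (lam c) (lam x)))"

definition orbit :: "('v \<Rightarrow> 'w) \<Rightarrow> 'v \<Rightarrow> 'v set" where
  "orbit lam u = {x. lam x = lam u}"

definition spectral :: "('v \<Rightarrow> 'w) \<Rightarrow> 'v set \<Rightarrow> bool" where
  "spectral lam E \<longleftrightarrow> (\<exists>Q. E = lam -` Q)"

definition is_cone :: "'a::real_vector set \<Rightarrow> bool" where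
  "is_cone S \<longleftrightarrow> S \<noteq> {} \<and> (\<forall>x\<in>S. \<forall>t::real. t \<ge> 0 \<longrightarrow> t *\<^sub>R x \<in> S)"

end

theory Submission
  imports Defs
begin

lemma ftvn_facts:
  assumes "FTvN_system lam"
  shows "inner (lam x) (lam x) = inner x x" "inner x y \<le> inner (lam x) (lam y)"
    "q \<in> range lam \<Longrightarrow> \<exists>x. lam x = q \<and> inner c x = inner (lam c) (lam x)"
proof -
  have "norm (lam x) = norm x" using assms unfolding FTvN_system_def by blast
  then show "inner (lam x) (lam x) = inner x x" by (metis power2_norm_eq_inner)
  show "inner x y \<le> inner (lam x) (lam y)" using assms unfolding FTvN_system_def by blast
  show "q \<in> range lam \<Longrightarrow> \<exists>x. lam x = q \<and> inner c x = inner (lam c) (lam x)"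
    using assms unfolding FTvN_system_def by blast
qed

lemma zero_by_inner:
  fixes a :: "'a::real_inner"
  assumes "inner a a \<le> 0" shows "a = 0"
  using assms by (metis inner_gt_zero_iff not_le)

lemma ftvn_comb:
  assumes F: "FTvN_system lam" and t: "0 \<le> t" "t \<le> 1"
    and c: "inner u x = inner (lam u) (lam x)"
  shows "lam (t *\<^sub>R u + (1 - t) *\<^sub>R x) = t *\<^sub>R lam u + (1 - t) *\<^sub>R lam x"
proof -
  define w where "w = t *\<^sub>R u + (1 - t) *\<^sub>R x"
  define L where "L = lam w"
  define M where "M = t *\<^sub>R lam u + (1 - t) *\<^sub>R lam x"
  have LL: "inner L L = inner w w" unfolding L_def by (rule ftvn_facts(1)[OF F])
  have "inner M M = t*t*inner (lam u) (lam u) + (1-t)*(1-t)*inner (lam x) (lam x)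
        + 2*t*(1-t)*inner (lam u) (lam x)"
    unfolding M_def by (simp add: inner_add_left inner_add_right inner_commute algebra_simps)
  also have "\<dots> = t*t*inner u u + (1-t)*(1-t)*inner x x + 2*t*(1-t)*inner u x"
    using ftvn_facts(1)[OF F] c by simp
  also have "\<dots> = inner w w"
    unfolding w_def by (simp add: inner_add_left inner_add_right inner_commute algebra_simps)
  finally have MM: "inner M M = inner w w" .
  have LM: "inner L M = t * inner (lam w) (lam u) + (1-t) * inner (lam w) (lam x)"
    unfolding L_def M_def by (simp add: inner_add_right)
  have "t * inner w u \<le> t * inner (lam w) (lam u)"
    using ftvn_facts(2)[OF F] t by (simp add: mult_left_mono)
  moreover have "(1-t) * inner w x \<le> (1-t) * inner (lam w) (lam x)"
    using ftvn_facts(2)[OF F] t by (simp add: mult_left_mono)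
  moreover have "inner w w = t * inner w u + (1-t) * inner w x"
    unfolding w_def by (simp add: inner_add_right)
  ultimately have "inner w w \<le> inner L M" using LM by linarith
  moreover have "inner (L - M) (L - M) = inner L L - 2 * inner L M + inner M M"
    by (simp add: inner_diff_left inner_diff_right inner_commute)
  ultimately have "inner (L - M) (L - M) \<le> 0" using LL MM by linarith
  then have "L = M" using zero_by_inner by force
  then show ?thesis unfolding L_def M_def w_def .
qed

lemma ftvn_hom:
  assumes F: "FTvN_system lam" and s: "0 \<le> s"
  shows "lam (s *\<^sub>R u) = s *\<^sub>R lam u"
proof -
  define L where "L = lam (s *\<^sub>R u)"
  define M where "M = s *\<^sub>R lam u"
  have LL: "inner L L = s * s * inner u u" unfolding L_def using ftvn_facts(1)[OF F] by simp
  have MM: "inner M M = s * s * inner u u" unfolding M_def using ftvn_facts(1)[OF F] by simp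
  have "s * inner (s *\<^sub>R u) u \<le> s * inner L (lam u)"
    unfolding L_def using ftvn_facts(2)[OF F, of "s *\<^sub>R u" u] s by (simp add: mult_left_mono)
  then have LM: "s * s * inner u u \<le> inner L M" unfolding M_def by simp
  have "inner (L - M) (L - M) = inner L L - 2 * inner L M + inner M M"
    by (simp add: inner_diff_left inner_diff_right inner_commute)
  then have "inner (L - M) (L - M) \<le> 0" using LL MM LM by linarith
  then have "L = M" using zero_by_inner by force
  then show ?thesis unfolding L_def M_def .
qed

lemma conv_part:
  assumes F: "FTvN_system lam" and E: "convex E" "spectral lam E"
  shows "convex (lam ` E)"
proof (rule convexI)
  fix p q and t v' :: real
  assume p: "p \<in> lam ` E" and q: "q \<in> lam ` E" and t0: "0 \<le> t" "0 \<le> v'" "t + v' = 1"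
  then have t: "0 \<le> t" "t \<le> 1" and v': "v' = 1 - t" by auto
  obtain u where u: "u \<in> E" "p = lam u" using p by blast
  obtain v where v: "v \<in> E" "q = lam v" using q by blast
  obtain x where x: "lam x = q" "inner u x = inner (lam u) (lam x)"
    using ftvn_facts(3)[OF F, of q u] v by blast
  obtain Q where Q: "E = lam -` Q" using E(2) unfolding spectral_def by blast
  have "x \<in> E" using v x Q by auto
  then have "t *\<^sub>R u + (1 - t) *\<^sub>R x \<in> E" using E(1) u t by (intro convexD) auto
  moreover have "lam (t *\<^sub>R u + (1 - t) *\<^sub>R x) = t *\<^sub>R p + (1 - t) *\<^sub>R q"
    using ftvn_comb[OF F t x(2)] u x by simp
  ultimately have "t *\<^sub>R p + (1 - t) *\<^sub>R q \<in> lam ` E" by (metis image_eqI)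
  then show "t *\<^sub>R p + v' *\<^sub>R q \<in> lam ` E" using v' by simp
qed

theorem proposition5p2:
  fixes lam :: "'v::real_inner \<Rightarrow> 'w::real_inner"
  assumes "FTvN_system lam"
  shows "(\<forall>E. convex E \<and> spectral lam E \<longrightarrow> convex (lam ` E)) \<and>
         (\<forall>E. spectral lam E \<and> is_cone E \<and> convex E \<longrightarrow> is_cone (lam ` E) \<and> convex (lam ` E))"
proof (intro conjI allI impI)
  fix E assume "convex E \<and> spectral lam E"
  then show "convex (lam ` E)" using conv_part[OF assms] by blast
next
  fix E assume H: "spectral lam E \<and> is_cone E \<and> convex E"
  then show "convex (lam ` E)" using conv_part[OF assms] by blast
  have "\<forall>p\<in>lam ` E. \<forall>t::real. t \<ge> 0 \<longrightarrow> t *\<^sub>R p \<in> lam ` E"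
  proof (intro ballI allI impI)
    fix p and t :: real assume "p \<in> lam ` E" "t \<ge> 0"
    then obtain u where "u \<in> E" "p = lam u" by blast
    moreover have "t *\<^sub>R u \<in> E" using H \<open>u \<in> E\<close> \<open>t \<ge> 0\<close> unfolding is_cone_def by blast
    ultimately show "t *\<^sub>R p \<in> lam ` E" using ftvn_hom[OF assms \<open>t \<ge> 0\<close>, of u]
      by (metis image_eqI)
  qed
  then show "is_cone (lam ` E)" using H unfolding is_cone_def by blast
qed

end
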